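(* Let $G=(V,E)$ with weight function $w$ be a Frobenius instance with parameter $k$, with parts $V_1,\dots,V_\ell$ and layer weights $w_1,\dots,w_\ell$. Then $G$ has a closed set $S\subseteq V$ with $w(S)=k$ if and only if $\gcd(w_1,\dots,w_\ell)$ divides $k$.
   Context: For a directed graph $G=(V,E)$, a set $S\subseteq V$ is closed if for every edge $(u,v)\in E$, $u\in S$ implies $v\in S$. $D(v)$ denotes the set of vertices reachable from $v$ by a directed path, including $v$ itself. For a set $S$, $w(S)=\sum_{v\in S}w(v)$. A Frobenius instance with parameter $k\in\mathbb{N}$ is a directed graph $G=(V,E)$ with weight function $w:V\to\mathbb{N}$ and a partition $V=V_1\cup\cdots\cup V_\ell$ satisfying the following four conditions: (P1) there are weights $w_1,\dots,w_\ell$ with $w(v)=w_i$ for all $v\in V_i$ and all $i\in[\ell]$; (P2) every edge $(u,v)\in E$ has $u\in V_i$ and $v\in V_j$ for some $\ell\ge i>j\ge1$; (P3) $|V_i|\ge k$ for all $i\in[\ell]$; (P4) $w(D(v))\le\sqrt{k/2}$ for all $v\in V$. *)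

theory Defs
  imports Complex_Main
begin

definition closed_set :: "'a set \<Rightarrow> ('a \<times> 'a) set \<Rightarrow> 'a set \<Rightarrow> bool" where
  "closed_set V E S \<longleftrightarrow> S \<subseteq> V \<and> (\<forall>u v. (u, v) \<in> E \<longrightarrow> u \<in> S \<longrightarrow> v \<in> S)"

definition reach :: "('a \<times> 'a) set \<Rightarrow> 'a \<Rightarrow> 'a set" where
  "reach E v = {u. (v, u) \<in> E\<^sup>*}"

definition wset :: "('a \<Rightarrow> nat) \<Rightarrow> 'a set \<Rightarrow> nat" where
  "wset w S = (\<Sum>v\<in>S. w v)"

definition frobenius_instance ::
  "'a set \<Rightarrow> ('a \<times> 'a) set \<Rightarrow> ('a \<Rightarrow> nat) \<Rightarrow> nat \<Rightarrow> (nat \<Rightarrow> 'a set) \<Rightarrow> (nat \<Rightarrow> nat) \<Rightarrow> nat \<Rightarrow> bool"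
  where
  "frobenius_instance V E w l P ws k \<longleftrightarrow>
     finite V \<and> E \<subseteq> V \<times> V \<and>
     V = (\<Union>i\<in>{1..l}. P i) \<and>
     (\<forall>i\<in>{1..l}. \<forall>j\<in>{1..l}. i \<noteq> j \<longrightarrow> P i \<inter> P j = {}) \<and>
     (\<forall>i\<in>{1..l}. \<forall>v\<in>P i. w v = ws i) \<and>
     (\<forall>u v. (u, v) \<in> E \<longrightarrow> (\<exists>i\<in>{1..l}. \<exists>j\<in>{1..l}. u \<in> P i \<and> v \<in> P j \<and> i > j)) \<and>
     (\<forall>i\<in>{1..l}. card (P i) \<ge> k) \<and>
     (\<forall>v\<in>V. real (wset w (reach E v)) \<le> sqrt (real k / 2))"

end

theory Submission
  imports Defs
begin


lemma sum_UN_le_nat: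
  fixes g :: "'a \<Rightarrow> nat"
  assumes "finite X" "\<forall>x\<in>X. finite (f x)"
  shows "sum g (\<Union>(f ` X)) \<le> (\<Sum>x\<in>X. sum g (f x))"
  using assms
proof (induction X rule: finite_induct)
  case empty then show ?case by simp
next
  case (insert x F)
  have "sum g (\<Union>(f ` insert x F)) = sum g (f x \<union> \<Union>(f ` F))" by simp
  also have "\<dots> \<le> sum g (f x) + sum g (\<Union>(f ` F))"
    using insert by (simp add: sum_Un_nat)
  also have "\<dots> \<le> sum g (f x) + (\<Sum>y\<in>F. sum g (f y))" using insert by simp
  finally show ?case using insert by simp
qed

lemma congr_solve:
  fixes g a c :: nat
  assumes g: "g > 0" and dc: "gcd g a dvd c"
  shows "\<exists>m. m \<le> g - gcd g a \<and> m < g div gcd g a \<and> (m * a) mod g = c mod g"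
proof (cases "a = 0")
  case True
  then have "gcd g a = g" by simp
  then show ?thesis using dc True g by (intro exI[of _ 0]) auto
next
  case False
  define d where "d = gcd g a"
  have dpos: "d > 0" using g d_def by simp
  obtain x y where xy: "a * x = g * y + gcd a g" using bezout_nat[OF False] by blast
  have dg: "d dvd g" by (simp add: d_def)
  have da: "d dvd a" by (simp add: d_def)
  define q where "q = g div d"
  have gq: "g = q * d" using dg q_def by simp
  have qpos: "q > 0" using g gq by (cases q) auto
  define m' where "m' = x * (c div d)"
  have "(m' * a) mod g = c mod g"
  proof -
    have "m' * a = (g * y + d) * (c div d)" using xy by (simp add: m'_def d_def gcd.commute mult.commute mult.left_commute)
    also have "\<dots> = g * (y * (c div d)) + c" using dc d_def by (simp add: algebra_simps)
    finally show ?thesis by simp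
  qed
  define m where "m = m' mod q"
  have "m' = m + q * (m' div q)" by (simp add: m_def)
  moreover obtain kk where kk: "a = d * kk" using da by (auto elim!: dvdE)
  ultimately have "m' * a = m * a + g * (kk * (m' div q))"
    using gq by (metis (no_types, lifting) distrib_right mult.assoc mult.commute mult.left_commute)
  then have "(m * a) mod g = c mod g" using \<open>(m' * a) mod g = c mod g\<close>
    by (metis mod_mult_self2)
  moreover have "m < q" using qpos m_def by simp
  moreover have "m \<le> g - d"
  proof -
    obtain q' d' where "q = Suc q'" "d = Suc d'" using qpos dpos by (metis gr0_implies_Suc)
    then have "q + d \<le> q * d + 1" by simp
    then show ?thesis using \<open>m < q\<close> gq by linarith
  qed
  ultimately show ?thesis unfolding d_def q_def by blast
qed


locale frob =
  fixes V :: "'a set" and E :: "('a \<times> 'a) set" and w :: "'a \<Rightarrow> nat"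
    and l :: nat and P :: "nat \<Rightarrow> 'a set" and ws :: "nat \<Rightarrow> nat" and k :: nat
  assumes F: "frobenius_instance V E w l P ws k"
begin

lemma Fc: "finite V \<and> E \<subseteq> V \<times> V \<and>
     V = (\<Union>i\<in>{1..l}. P i) \<and>
     (\<forall>i\<in>{1..l}. \<forall>j\<in>{1..l}. i \<noteq> j \<longrightarrow> P i \<inter> P j = {}) \<and>
     (\<forall>i\<in>{1..l}. \<forall>v\<in>P i. w v = ws i) \<and>
     (\<forall>u v. (u, v) \<in> E \<longrightarrow> (\<exists>i\<in>{1..l}. \<exists>j\<in>{1..l}. u \<in> P i \<and> v \<in> P j \<and> i > j)) \<and>
     (\<forall>i\<in>{1..l}. card (P i) \<ge> k) \<and>
     (\<forall>v\<in>V. real (wset w (reach E v)) \<le> sqrt (real k / 2))"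
  using F unfolding frobenius_instance_def .

lemma finV: "finite V" using Fc by (elim conjE)
lemma EV: "E \<subseteq> V \<times> V" using Fc by (elim conjE)
lemma VU: "V = (\<Union>i\<in>{1..l}. P i)" using Fc by (elim conjE)
lemma disj: "i\<in>{1..l} \<Longrightarrow> j\<in>{1..l} \<Longrightarrow> i \<noteq> j \<Longrightarrow> P i \<inter> P j = {}"
  using Fc by (elim conjE) simp
lemma wP: "i\<in>{1..l} \<Longrightarrow> v\<in>P i \<Longrightarrow> w v = ws i"
  using Fc by (elim conjE) simp
lemma edg: "(u, v) \<in> E \<Longrightarrow> (\<exists>i\<in>{1..l}. \<exists>j\<in>{1..l}. u \<in> P i \<and> v \<in> P j \<and> i > j)"
  using Fc by (elim conjE) simp
lemma cardP: "i\<in>{1..l} \<Longrightarrow> card (P i) \<ge> k"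
  using Fc by (elim conjE) simp
lemma P4all: "\<forall>v\<in>V. real (wset w (reach E v)) \<le> sqrt (real k / 2)"
  using Fc by (elim conjE)
lemma P4: "v\<in>V \<Longrightarrow> real (wset w (reach E v)) \<le> sqrt (real k / 2)"
  using P4all by blast

definition lay :: "'a \<Rightarrow> nat" where "lay v = (SOME i. i \<in> {1..l} \<and> v \<in> P i)"

lemma lay: "v \<in> V \<Longrightarrow> lay v \<in> {1..l} \<and> v \<in> P (lay v)"
proof -
  assume "v \<in> V"
  then obtain i where "i \<in> {1..l} \<and> v \<in> P i" using VU by blast
  then show ?thesis unfolding lay_def by (rule someI)
qed

lemma lay_unique: "v \<in> P i \<Longrightarrow> i \<in> {1..l} \<Longrightarrow> lay v = i"
proof -
  assume a: "v \<in> P i" "i \<in> {1..l}"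
  then have "v \<in> V" using VU by blast
  then have "lay v \<in> {1..l}" "v \<in> P (lay v)" using lay by auto
  then show ?thesis using disj[of i "lay v"] a by (cases "lay v = i") auto
qed

lemma PV: "i \<in> {1..l} \<Longrightarrow> P i \<subseteq> V" using VU by blast

lemma w_lay: "v \<in> V \<Longrightarrow> w v = ws (lay v)" using lay wP by blast

lemma edge: "(u, v) \<in> E \<Longrightarrow> u \<in> V \<and> v \<in> V \<and> lay v < lay u"
proof -
  assume "(u, v) \<in> E"
  then obtain i j where "i\<in>{1..l}" "j\<in>{1..l}" "u \<in> P i" "v \<in> P j" "i > j" using edg by blast
  then show ?thesis using lay_unique[of u i] lay_unique[of v j] PV[of i] PV[of j] by auto
qed

lemma trancl_lay: "(u, v) \<in> E\<^sup>+ \<Longrightarrow> u \<in> V \<and> v \<in> V \<and> lay v < lay u"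
proof (induction rule: trancl_induct)
  case (base y) then show ?case using edge by blast
next
  case (step y z) then show ?case using edge[of y z] by auto
qed

lemma reachV: "v \<in> V \<Longrightarrow> reach E v \<subseteq> V"
proof
  fix u assume "v \<in> V" "u \<in> reach E v"
  then have "(v, u) \<in> E\<^sup>*" unfolding reach_def by simp
  then show "u \<in> V" using \<open>v \<in> V\<close> trancl_lay[of v u] by (auto simp: rtrancl_eq_or_trancl)
qed

lemma reach_self: "v \<in> reach E v" unfolding reach_def by simp

lemma wset_mono: "A \<subseteq> B \<Longrightarrow> B \<subseteq> V \<Longrightarrow> wset w A \<le> wset w B"
  unfolding wset_def by (rule sum_mono2) (auto intro: finite_subset[OF _ finV])

definition cl :: "'a set \<Rightarrow> 'a set" where "cl X = \<Union>(reach E ` X)"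

lemma cl_closed:
  assumes "closed_set V E A" "X \<subseteq> V"
  shows "closed_set V E (A \<union> cl X)"
  unfolding closed_set_def
proof (intro conjI allI impI)
  show "A \<union> cl X \<subseteq> V" using assms reachV unfolding closed_set_def cl_def by blast
next
  fix u v assume uv: "(u, v) \<in> E" and u: "u \<in> A \<union> cl X"
  show "v \<in> A \<union> cl X"
  proof (cases "u \<in> A")
    case True then show ?thesis using assms(1) uv unfolding closed_set_def by blast
  next
    case False
    then obtain x where "x \<in> X" "(x, u) \<in> E\<^sup>*" using u unfolding cl_def reach_def by blast
    then have "(x, v) \<in> E\<^sup>*" using uv by (meson rtrancl.rtrancl_into_rtrancl)
    then show ?thesis using \<open>x \<in> X\<close> unfolding cl_def reach_def by blast
  qed
qed

end

context frob begin

lemma wset_union_disj: "A \<subseteq> V \<Longrightarrow> B \<subseteq> V \<Longrightarrow> A \<inter> B = {} \<Longrightarrow> wset w (A \<union> B) = wset w A + wset w B"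
  unfolding wset_def by (rule sum.union_disjoint) (auto intro: finite_subset[OF _ finV])

lemma wset_union_le: "A \<subseteq> V \<Longrightarrow> B \<subseteq> V \<Longrightarrow> wset w (A \<union> B) \<le> wset w A + wset w B"
  unfolding wset_def using finite_subset[OF _ finV, of A] finite_subset[OF _ finV, of B]
  by (simp add: sum_Un_nat)

lemma cl_sub: "X \<subseteq> V \<Longrightarrow> cl X \<subseteq> V" unfolding cl_def using reachV by blast

lemma cl_weight:
  assumes A: "closed_set V E A" and i: "i \<in> {1..l}" and X: "X \<subseteq> P i - A"
  shows "\<exists>L. L \<subseteq> V \<and> (\<forall>v\<in>L. lay v < i) \<and>
           wset w (A \<union> cl X) = wset w A + card X * ws i + wset w L"
proof -
  have XV: "X \<subseteq> V" using X PV[OF i] by blast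
  have AV: "A \<subseteq> V" using A unfolding closed_set_def by blast
  define N where "N = cl X - A"
  define L where "L = N - X"
  have XN: "X \<subseteq> N" using X reach_self unfolding N_def cl_def by blast
  have NV: "N \<subseteq> V" using cl_sub[OF XV] N_def by blast
  have LV: "L \<subseteq> V" using NV L_def by blast
  have "A \<union> cl X = A \<union> N" unfolding N_def by blast
  then have e1: "wset w (A \<union> cl X) = wset w A + wset w N"
    using wset_union_disj[OF AV NV] N_def by auto
  have "N = X \<union> L" using XN L_def by blast
  then have e2: "wset w N = wset w X + wset w L"
    using wset_union_disj[OF XV LV] L_def by auto
  have e3: "wset w X = card X * ws i"
  proof -
    have "wset w X = (\<Sum>v\<in>X. ws i)" unfolding wset_def
      using X wP[OF i] by (intro sum.cong) auto
    then show ?thesis by simp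
  qed
  have lowL: "\<forall>v\<in>L. lay v < i"
  proof
    fix u assume u: "u \<in> L"
    then obtain x where x: "x \<in> X" "(x, u) \<in> E\<^sup>*" unfolding L_def N_def cl_def reach_def by blast
    have "u \<noteq> x" using u x L_def by blast
    then have "(x, u) \<in> E\<^sup>+" using x by (auto simp: rtrancl_eq_or_trancl)
    then have "lay u < lay x" using trancl_lay by blast
    moreover have "lay x = i" using lay_unique x X i by blast
    ultimately show "lay u < i" by simp
  qed
  show ?thesis using e1 e2 e3 lowL LV by (intro exI[of _ L]) auto
qed

lemma cl_weight_le:
  assumes XV: "X \<subseteq> V" and sb: "\<forall>v\<in>V. wset w (reach E v) \<le> s"
  shows "wset w (cl X) \<le> card X * s"
proof -
  have fX: "finite X" using XV finite_subset finV by blast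
  have "wset w (cl X) \<le> (\<Sum>x\<in>X. wset w (reach E x))"
    unfolding wset_def cl_def
    using sum_UN_le_nat[OF fX, of "reach E" w] reachV XV finite_subset[OF _ finV] by blast
  also have "\<dots> \<le> card X * s" using sum_bounded_above[of X "\<lambda>x. wset w (reach E x)" s] sb XV by auto
  finally show ?thesis .
qed

lemma low_dvd:
  assumes "L \<subseteq> V" "\<forall>v\<in>L. lay v \<le> j"
  shows "Gcd (ws ` {1..j}) dvd wset w L"
  unfolding wset_def
proof (rule dvd_sum)
  fix v assume v: "v \<in> L"
  then have "v \<in> V" using assms by blast
  then have "lay v \<in> {1..j}" "w v = ws (lay v)" using lay[of v] assms v w_lay by auto
  then show "Gcd (ws ` {1..j}) dvd w v" by simp
qed

end

context frob begin

lemma ws_le: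
  assumes k1: "k \<ge> 1" and sb: "\<forall>v\<in>V. wset w (reach E v) \<le> s" and t: "t \<in> {1..l}"
  shows "ws t \<le> s"
proof -
  have "card (P t) \<ge> 1" using cardP[OF t] k1 by simp
  then obtain v where v: "v \<in> P t" by (metis card.empty ex_in_conv not_one_le_zero)
  then have vV: "v \<in> V" using PV[OF t] by blast
  have "ws t = wset w {v}" using wP[OF t v] by (simp add: wset_def)
  also have "\<dots> \<le> wset w (reach E v)" using reach_self reachV[OF vV] by (intro wset_mono) auto
  also have "\<dots> \<le> s" using sb vV by blast
  finally show ?thesis .
qed

lemma main_ind:
  assumes k1: "k \<ge> 1" and sb: "\<forall>v\<in>V. wset w (reach E v) \<le> s"
  shows "j \<le> l \<Longrightarrow> closed_set V E A \<Longrightarrow> wset w A \<le> k \<Longrightarrow>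
    Gcd (ws ` {1..j}) dvd (k - wset w A) \<Longrightarrow> s * (s - Gcd (ws ` {1..j})) \<le> k - wset w A \<Longrightarrow>
    \<exists>S. closed_set V E S \<and> wset w S = k"
proof (induction j arbitrary: A)
  case 0
  then show ?case by (intro exI[of _ A]) auto
next
  case (Suc j)
  define i where "i = Suc j"
  have i: "i \<in> {1..l}" using Suc.prems i_def by simp
  define g where "g = Gcd (ws ` {1..j})"
  define c where "c = k - wset w A"
  have "{1..Suc j} = insert i {1..j}" using i_def by auto
  then have dg: "Gcd (ws ` {1..Suc j}) = gcd g (ws i)" unfolding g_def by (simp add: gcd.commute)
  define d where "d = gcd g (ws i)"
  have AV: "A \<subseteq> V" using Suc.prems unfolding closed_set_def by blast
  have ddvd: "d dvd c" using Suc.prems dg d_def c_def by simp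
  have budget: "s * (s - d) \<le> c" using Suc.prems dg d_def c_def by simp
  have cardA: "ws i > 0 \<Longrightarrow> card (P i \<inter> A) \<le> wset w A"
  proof -
    assume wpos: "ws i > 0"
    have fin: "finite (P i \<inter> A)" using AV finV finite_subset by blast
    have "wset w (P i \<inter> A) = card (P i \<inter> A) * ws i" unfolding wset_def
      using wP[OF i] by (simp add: sum.cong[of _ _ w "\<lambda>_. ws i"])
    moreover have "wset w (P i \<inter> A) \<le> wset w A" using AV by (intro wset_mono) auto
    ultimately have "card (P i \<inter> A) * ws i \<le> wset w A" by simp
    moreover have "card (P i \<inter> A) \<le> card (P i \<inter> A) * ws i" using wpos by simp
    ultimately show ?thesis by linarith
  qed
  have cardDiff: "card (P i - A) = card (P i) - card (P i \<inter> A)"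
    using AV finV finite_subset by (intro card_Diff_subset_Int) blast
  have cP: "card (P i) \<ge> k" using cardP[OF i] .
  show ?case
  proof (cases "d = 0")
    case True
    then have "c = 0" using ddvd by simp
    then show ?thesis using Suc.prems c_def by (intro exI[of _ A]) auto
  next
    case dpos: False
    show ?thesis
    proof (cases "g = 0")
      case True
      then have dw: "d = ws i" using d_def by simp
      then have wpos: "ws i > 0" using dpos by simp
      define m where "m = c div ws i"
      have mc: "m * ws i = c" using ddvd dw m_def by simp
      have "m \<le> card (P i - A)"
      proof -
        have "m \<le> c" using mc wpos by (metis dvd_triv_left dvd_imp_le le_refl mult_0 nat_less_le not_gr_zero div_le_dividend m_def)
        then show ?thesis using cardA[OF wpos] cardDiff cP c_def Suc.prems by linarith
      qed
      then obtain X where X: "X \<subseteq> P i - A" "card X = m" by (meson obtain_subset_with_card_n)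
      have XV: "X \<subseteq> V" using X PV[OF i] by blast
      obtain L where L: "L \<subseteq> V" "\<forall>v\<in>L. lay v < i"
        "wset w (A \<union> cl X) = wset w A + card X * ws i + wset w L"
        using cl_weight[OF Suc.prems(2) i X(1)] by blast
      have "g dvd wset w L" unfolding g_def using L i_def by (intro low_dvd) auto
      then have "wset w L = 0" using True by simp
      then have "wset w (A \<union> cl X) = k" using L X mc c_def Suc.prems by simp
      then show ?thesis using cl_closed[OF Suc.prems(2) XV] by blast
    next
      case gpos: False
      have "\<not> ws ` {1..j} \<subseteq> {0}" using gpos unfolding g_def by simp
      then obtain t where t: "t \<in> {1..j}" "ws t \<noteq> 0" by blast
      have "g \<le> ws t" unfolding g_def using t by (intro dvd_imp_le) auto
      also have "ws t \<le> s" using ws_le[OF k1 sb] t Suc.prems by auto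
      finally have gs: "g \<le> s" .
      have dg': "d \<le> g" using gpos d_def by (simp add: dvd_imp_le)
      obtain m where m: "m \<le> g - d" "m < g div d" "(m * ws i) mod g = c mod g"
        using congr_solve[of g "ws i" c] gpos ddvd d_def by auto
      have msd: "m \<le> s - d" using m gs dg' by linarith
      have ms: "m * s \<le> c"
      proof -
        have "m * s \<le> (s - d) * s" using msd by (rule mult_le_mono1)
        then show ?thesis using budget by (metis mult.commute order_trans)
      qed
      have "m \<le> card (P i - A)"
      proof (cases "ws i = 0")
        case True
        then have "d = g" using d_def by simp
        then have "m = 0" using m gpos by simp
        then show ?thesis by simp
      next
        case False
        have "m \<le> s * (s - d)"
        proof (cases "s - d = 0")
          case True then show ?thesis using msd by simp
        next
          case False
          then have "s \<ge> 1" by simp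
          then have "s - d \<le> s * (s - d)" by simp
          then show ?thesis using msd by linarith
        qed
        then have "m \<le> c" using budget by linarith
        then show ?thesis using cardA False cardDiff cP c_def Suc.prems by fastforce
      qed
      then obtain X where X: "X \<subseteq> P i - A" "card X = m" by (meson obtain_subset_with_card_n)
      have XV: "X \<subseteq> V" using X PV[OF i] by blast
      obtain L where L: "L \<subseteq> V" "\<forall>v\<in>L. lay v < i"
        "wset w (A \<union> cl X) = wset w A + card X * ws i + wset w L"
        using cl_weight[OF Suc.prems(2) i X(1)] by blast
      define A' where "A' = A \<union> cl X"
      have A'c: "closed_set V E A'" using cl_closed[OF Suc.prems(2) XV] A'_def by simp
      have "wset w A' \<le> wset w A + wset w (cl X)" unfolding A'_def
        using wset_union_le[OF AV cl_sub[OF XV]] .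
      also have "\<dots> \<le> wset w A + m * s" using cl_weight_le[OF XV sb] X by simp
      finally have wA'1: "wset w A' \<le> wset w A + m * s" .
      define c' where "c' = k - wset w A'"
      have wA'k: "wset w A' \<le> k" using wA'1 ms c_def Suc.prems by linarith
      have ceq: "c = m * ws i + wset w L + c'" using L(3) X(2) A'_def c'_def c_def wA'k Suc.prems by simp
      have gL: "g dvd wset w L" unfolding g_def using L i_def by (intro low_dvd) auto
      have "g dvd c - m * ws i" using m(3) ceq mod_eq_dvd_iff_nat[of "m * ws i" c g] by simp
      then have "g dvd wset w L + c'" using ceq by simp
      then have gc': "g dvd c'" using gL by (simp add: dvd_add_right_iff)
      have "s - d \<ge> (s - g) + m" using m gs dg' by linarith
      then have "s * (s - d) \<ge> s * (s - g) + s * m" by (metis add_mult_distrib2 mult_le_mono2)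
      then have bud': "s * (s - g) \<le> c'" using budget ceq wA'1 c'_def c_def Suc.prems
        by (simp add: mult.commute) linarith
      show ?thesis using Suc.IH[of A'] Suc.prems(1) A'c wA'k gc' bud' c'_def g_def by simp
    qed
  qed
qed

end


theorem mainTheorem2:
  fixes V :: "'a set" and E :: "('a \<times> 'a) set" and w :: "'a \<Rightarrow> nat"
    and l :: nat and P :: "nat \<Rightarrow> 'a set" and ws :: "nat \<Rightarrow> nat" and k :: nat
  assumes "frobenius_instance V E w l P ws k"
  shows "(\<exists>S. closed_set V E S \<and> wset w S = k) \<longleftrightarrow> Gcd (ws ` {1..l}) dvd k"
proof -
  interpret frob V E w l P ws k using assms by (unfold_locales)
  show ?thesis
  proof
    assume "\<exists>S. closed_set V E S \<and> wset w S = k"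
    then obtain S where S: "closed_set V E S" "wset w S = k" by blast
    have "S \<subseteq> V" using S unfolding closed_set_def by blast
    then have "Gcd (ws ` {1..l}) dvd wset w S" using lay by (intro low_dvd) auto
    then show "Gcd (ws ` {1..l}) dvd k" using S by simp
  next
    assume dv: "Gcd (ws ` {1..l}) dvd k"
    show "\<exists>S. closed_set V E S \<and> wset w S = k"
    proof (cases "k = 0")
      case True
      then show ?thesis by (intro exI[of _ "{}"]) (simp add: closed_set_def wset_def)
    next
      case False
      define s where "s = nat \<lfloor>sqrt (real k / 2)\<rfloor>"
      have sb: "\<forall>v\<in>V. wset w (reach E v) \<le> s" using P4 unfolding s_def by (simp add: le_nat_floor)
      have "real s \<le> sqrt (real k / 2)"
      proof -
        have "sqrt (real k / 2) \<ge> 0" by simp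
        then have "\<lfloor>sqrt (real k / 2)\<rfloor> \<ge> 0" by simp
        then have "real s = real_of_int \<lfloor>sqrt (real k / 2)\<rfloor>" unfolding s_def by simp
        then show ?thesis by simp
      qed
      then have "real s * real s \<le> sqrt (real k / 2) * sqrt (real k / 2)"
        by (intro mult_mono) auto
      then have "real (s * s) \<le> real k" by simp
      then have ss: "s * s \<le> k" by linarith
      have "s * (s - Gcd (ws ` {1..l})) \<le> s * s" by simp
      then have "s * (s - Gcd (ws ` {1..l})) \<le> k" using ss by (rule order_trans)
      then have "s * (s - Gcd (ws ` {1..l})) \<le> k - wset w {}" by (simp add: wset_def)
      moreover have "closed_set V E {}" by (simp add: closed_set_def)
      ultimately show ?thesis using main_ind[OF _ sb, of l "{}"] False dv by (simp add: wset_def)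
    qed
  qed
qed
end
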